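(* Let $\phi\in C^3((0,\infty))$, $\eta=\phi'$ and $\hat\eta(r)=\eta(r)+2\eta(2r)$, and suppose there are constants $0<a_0<\tilde r_1<\tilde r_2<2a_0$ and $a_1>a_0$ such that: $\eta'(r)>0$ for $0<r<\tilde r_1$ and $\eta'(r)<0$ for $r>\tilde r_1$; $\eta''(r)<0$ for $0<r<\tilde r_2$ and $\eta''(r)>0$ for $r>\tilde r_2$; $\hat\eta(r)<0$ for $0<r<a_0$ and $\hat\eta(r)>0$ for $r>a_0$; $\hat\eta'(r)>0$ for $0<r<a_1$ and $\hat\eta'(r)<0$ for $r>a_1$. Let $N,K$ be positive integers with $K<N-1$, and let $\hat{\mathbf\Psi}^F:(0,\infty)^{2N+1}\to\mathbb R^{2N+1}$, $\mathbf r=(r_{-N},\dots,r_N)\mapsto(\hat\psi^F_{-N}(\mathbf r),\dots,\hat\psi^F_N(\mathbf r))$, be defined by $\hat\psi^F_j(\mathbf r)=\eta(r_j)+2\eta(2r_j)$ for $-N\le j\le -K$ and for $K\le j\le N$, and $\hat\psi^F_j(\mathbf r)=\eta(r_j)+\eta(r_j+r_{j-1})+\eta(r_j+r_{j+1})+[2\eta(2r_K)-\eta(r_K+r_{K-1})-\eta(r_K+r_{K+1})]$ for $-K+1\le j\le K-1$. Let $\mathbf a_0=(a_0,\dots,a_0)\in\mathbb R^{2N+1}$. If $\eta'(a_0)+8\eta'(2a_0)>0$, then $\hat{\mathbf\Psi}^F$ is bijective in a neighborhood of $\mathbf a_0$, i.e. there is an open neighborhood $U$ of $\mathbf a_0$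 such that $\hat{\mathbf\Psi}^F$ maps $U$ bijectively onto an open neighborhood of $\hat{\mathbf\Psi}^F(\mathbf a_0)$.
   Context: This map $\hat{\mathbf\Psi}^F$ is the (symmetrized) internal conjugate force of the force-based quasicontinuum approximation of a one-dimensional atomic chain with nearest and next-nearest neighbour pair interactions given by the potential $\phi$; indices $-K+1,\dots,K-1$ form the atomistic region and the others the continuum region. *)

theory Defs
  imports "HOL-Analysis.Analysis"
begin

text \<open>Vectors (r_{-N},...,r_N) in R^{2N+1} are represented as functions int => real
  vanishing outside {-N..N}; this set carries the subspace topology of the product
  topology on int => real, which is the Euclidean topology of R^{2N+1}.\<close>

definition chain_space :: "int \<Rightarrow> (int \<Rightarrow> real) set" where
  "chain_space N = {r. \<forall>j. j \<notin> {-N..N} \<longrightarrow> r j = 0}"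

definition pos_chain :: "int \<Rightarrow> (int \<Rightarrow> real) set" where
  "pos_chain N = {r \<in> chain_space N. \<forall>j\<in>{-N..N}. r j > 0}"

definition PsiF :: "(real \<Rightarrow> real) \<Rightarrow> int \<Rightarrow> int \<Rightarrow> (int \<Rightarrow> real) \<Rightarrow> (int \<Rightarrow> real)" where
  "PsiF eta N K r = (\<lambda>j.
     if j \<in> {-N..-K} \<union> {K..N} then eta (r j) + 2 * eta (2 * r j)
     else if j \<in> {-K+1..K-1} then
       eta (r j) + eta (r j + r (j-1)) + eta (r j + r (j+1))
       + (2 * eta (2 * r K) - eta (r K + r (K-1)) - eta (r K + r (K+1)))
     else 0)"

end

theory Submission
  imports Defs "HOL-Homology.Homology"
begin

lemma coord_cont: "continuous_on S (\<lambda>r::int\<Rightarrow>real. r j)"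
  by (rule continuous_on_subset[OF continuous_on_product_coordinates]) simp

lemma gh_test:
  fixes N :: int and n :: nat
  assumes n_def: "n = nat (2*N+1)"
  and h_def: "h = (\<lambda>r::int\<Rightarrow>real. \<lambda>k::nat. if k < n then r (int k - N) else 0)"
  and g_def: "g = (\<lambda>x::nat\<Rightarrow>real. \<lambda>j::int. if j \<in> {-N..N} then x (nat (j+N)) else 0)"
  shows "\<forall>x\<in>{r::int\<Rightarrow>real. \<forall>j. j \<notin> {-N..N} \<longrightarrow> r j = 0}. g (h x) = x"
  unfolding fun_eq_iff
proof (intro ballI allI)
  fix x j assume x: "x \<in> {r::int\<Rightarrow>real. \<forall>j. j \<notin> {-N..N} \<longrightarrow> r j = 0}"
  show "g (h x) j = x j"
  proof (cases "j \<in> {-N..N}")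
    case True
    then have "nat (j+N) < n" "int (nat (j+N)) - N = j" using n_def by auto
    then show ?thesis using True by (simp add: g_def h_def)
  next
    case False then show ?thesis using x unfolding g_def by auto
  qed
qed
lemma hg_test:
  fixes N :: int and n :: nat
  assumes n_def: "n = nat (2*N+1)"
  and h_def: "h = (\<lambda>r::int\<Rightarrow>real. \<lambda>k::nat. if k < n then r (int k - N) else 0)"
  and g_def: "g = (\<lambda>x::nat\<Rightarrow>real. \<lambda>j::int. if j \<in> {-N..N} then x (nat (j+N)) else 0)"
  shows "\<forall>y\<in>{x::nat\<Rightarrow>real. \<forall>i\<ge>n. x i = 0}. h (g y) = y"
  unfolding fun_eq_iff
proof (intro ballI allI)
  fix y k assume y: "y \<in> {x::nat\<Rightarrow>real. \<forall>i\<ge>n. x i = 0}"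
  show "h (g y) k = y k"
  proof (cases "k < n")
    case True
    then have "int k - N \<in> {-N..N}" "nat (int k - N + N) = k" using n_def by auto
    then show ?thesis using True by (simp add: g_def h_def)
  next
    case False then show ?thesis using y by (simp add: h_def)
  qed
qed

lemma iod_chain:
  fixes N :: int
  assumes U: "openin (top_of_set (chain_space N)) U"
    and cf: "continuous_map (subtopology (top_of_set (chain_space N)) U) (top_of_set (chain_space N)) f"
    and inj: "inj_on f U"
  shows "openin (top_of_set (chain_space N)) (f ` U)"
proof -
  define n where "n = nat (2*N+1)"
  define h where "h = (\<lambda>r::int\<Rightarrow>real. \<lambda>k::nat. if k < n then r (int k - N) else 0)"
  define g where "g = (\<lambda>x::nat\<Rightarrow>real. \<lambda>j::int. if j \<in> {-N..N} then x (nat (j+N)) else 0)"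
  let ?X = "top_of_set (chain_space N)"
  let ?E = "Euclidean_space n"
  have tX: "topspace ?X = chain_space N" by simp
  have c1: "continuous_map ?X ?E h"
    unfolding Euclidean_space_def
    apply (rule continuous_map_into_subtopology)
    unfolding continuous_map_componentwise_UNIV h_def
    apply (auto simp: coord_cont)
    done
  have c2: "continuous_map ?E euclidean g"
        unfolding euclidean_product_topology[symmetric] continuous_map_componentwise_UNIV g_def Euclidean_space_def
        by (auto intro!: continuous_map_from_subtopology continuous_map_product_projection)
  have c3: "continuous_map ?E ?X g"
    by (rule continuous_map_into_subtopology[OF c2]) (auto simp: g_def chain_space_def)
  have gh: "\<forall>x\<in>topspace ?X. g (h x) = x"
      using gh_test[OF n_def h_def g_def] by (simp add: chain_space_def)
  have hg: "\<forall>y\<in>topspace ?E. h (g y) = y"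
      using hg_test[OF n_def h_def g_def] by (simp add: topspace_Euclidean_space)
  have hm: "homeomorphic_maps ?X ?E h g"
    unfolding homeomorphic_maps_def using c1 c3 gh hg by blast
  then have hh: "homeomorphic_map ?X ?E h"
    using homeomorphic_maps_map by blast
  have Usub: "U \<subseteq> chain_space N" using U openin_imp_subset by fastforce
  have fU: "f ` U \<subseteq> chain_space N"
    using cf Usub continuous_map_image_subset_topspace by fastforce
  have U': "openin ?E (h ` U)"
    using homeomorphic_map_openness[OF hh] Usub U by simp
  have ghU: "g (h u) = u" if "u \<in> U" for u using gh Usub that by auto
  have gU: "g ` (h ` U) \<subseteq> U" using ghU by auto
  have c4: "continuous_map (subtopology ?E (h ` U)) (subtopology ?X U) g"
    by (rule continuous_map_into_subtopology[OF continuous_map_from_subtopology[OF c3]])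
       (use gU in auto)
  have cf': "continuous_map (subtopology ?E (h ` U)) ?E (h \<circ> f \<circ> g)"
    using continuous_map_compose[OF continuous_map_compose[OF c4 cf] c1] by (simp add: o_def)
  have inj': "inj_on (h \<circ> f \<circ> g) (h ` U)"
  proof (rule inj_onI)
    fix a b assume "a \<in> h ` U" "b \<in> h ` U" "(h \<circ> f \<circ> g) a = (h \<circ> f \<circ> g) b"
    then obtain u v where uv: "u \<in> U" "v \<in> U" "a = h u" "b = h v" "h (f u) = h (f v)"
      using ghU by auto
    then have "g (h (f u)) = g (h (f v))" by simp
    moreover have "f u \<in> chain_space N" "f v \<in> chain_space N" using fU uv by auto
    ultimately have "f u = f v" using gh by simp
    then show "a = b" using inj uv by (auto dest: inj_onD)
  qed
  have "openin ?E ((h \<circ> f \<circ> g) ` (h ` U))"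
    by (rule invariance_of_domain_Euclidean_space[OF U' cf' inj'])
  moreover have "(h \<circ> f \<circ> g) ` (h ` U) = h ` (f ` U)"
    using ghU by (auto simp: image_iff)
  ultimately show ?thesis
    using homeomorphic_map_openness[OF hh] fU by simp
qed
lemma prod_bound:
  fixes a b M :: real
  assumes "\<bar>a\<bar> \<le> M" "\<bar>b\<bar> \<le> M"
  shows "\<bar>a*b\<bar> \<le> M*M"
  using assms by (simp add: abs_mult mult_mono')

lemma key_ineq:
  fixes di dm dp dK dKm dKp e0 e1 e2 f0 f1 f2 \<alpha> \<beta> \<epsilon> M :: real
  assumes d: "\<bar>di\<bar> = M" "\<bar>dm\<bar> \<le> M" "\<bar>dp\<bar> \<le> M" "\<bar>dK\<bar> \<le> M" "\<bar>dKm\<bar> \<le> M" "\<bar>dKp\<bar> \<le> M"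
    and e: "\<bar>e0-\<alpha>\<bar> < \<epsilon>" "\<bar>e1-\<beta>\<bar> < \<epsilon>" "\<bar>e2-\<beta>\<bar> < \<epsilon>" "\<bar>f0-\<beta>\<bar> < \<epsilon>" "\<bar>f1-\<beta>\<bar> < \<epsilon>" "\<bar>f2-\<beta>\<bar> < \<epsilon>"
    and be: "\<beta> + \<epsilon> < 0"
  shows "di*(e0*di + e1*(di+dm) + e2*(di+dp) + 2*(f0*(2*dK)) - f1*(dK+dKm) - f2*(dK+dKp))
           \<ge> (\<alpha>+8*\<beta>-13*\<epsilon>)*(M*M)"
proof -
  have M0: "M \<ge> 0" using d(1) by auto
  have s0: "di*di = M*M" using d(1) by (metis abs_mult_self_eq)
  have s1: "e0*(di*di) \<ge> (\<alpha>-\<epsilon>)*(M*M)"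
    unfolding s0 by (rule mult_right_mono) (use e(1) M0 in auto)
  have nb: "\<bar>di*x\<bar> \<le> M*M" if "\<bar>x\<bar> \<le> M" for x
    using prod_bound[of di M x] d(1) that by auto
  have s3: "e*(di*(di+x)) \<ge> (\<beta>-\<epsilon>)*(2*(M*M))" if "\<bar>x\<bar> \<le> M" "\<bar>e-\<beta>\<bar> < \<epsilon>" for e x
  proof -
    have X: "0 \<le> di*(di+x)" "di*(di+x) \<le> 2*(M*M)"
      using nb[OF that(1)] s0 by (auto simp: algebra_simps abs_le_iff)
    have "e*(di*(di+x)) \<ge> (\<beta>-\<epsilon>)*(di*(di+x))"
      by (rule mult_right_mono) (use X that in auto)
    moreover have "(\<beta>-\<epsilon>)*(di*(di+x)) \<ge> (\<beta>-\<epsilon>)*(2*(M*M))"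
      by (rule mult_left_mono_neg) (use X be e in auto)
    ultimately show ?thesis by linarith
  qed
  have c4: "\<bar>4*f0-f1-f2\<bar> \<le> -2*\<beta>+6*\<epsilon>" using e be by (auto simp: abs_le_iff abs_less_iff)
  have s4: "(4*f0-f1-f2)*(di*dK) \<ge> -((-2*\<beta>+6*\<epsilon>)*(M*M))"
  proof -
    have "\<bar>(4*f0-f1-f2)*(di*dK)\<bar> \<le> (-2*\<beta>+6*\<epsilon>)*(M*M)"
      unfolding abs_mult by (rule mult_mono) (use c4 nb[OF d(4)] in auto)
    then show ?thesis by (auto simp: abs_le_iff)
  qed
  have s5: "-(f*(di*x)) \<ge> (\<beta>-\<epsilon>)*(M*M)" if "\<bar>x\<bar> \<le> M" "\<bar>f-\<beta>\<bar> < \<epsilon>" for f x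
  proof -
    have "\<bar>f*(di*x)\<bar> \<le> (-\<beta>+\<epsilon>)*(M*M)"
      unfolding abs_mult by (rule mult_mono) (use that be nb[OF that(1)] in auto)
    then have "-(f*(di*x)) \<ge> -((-\<beta>+\<epsilon>)*(M*M))" by (auto simp: abs_le_iff)
    then show ?thesis by (simp add: algebra_simps)
  qed
  have "di*(e0*di + e1*(di+dm) + e2*(di+dp) + 2*(f0*(2*dK)) - f1*(dK+dKm) - f2*(dK+dKp))
     = e0*(di*di) + e1*(di*(di+dm)) + e2*(di*(di+dp)) + (4*f0-f1-f2)*(di*dK) - f1*(di*dKm) - f2*(di*dKp)"
    by (simp add: algebra_simps)
  also have "\<dots> \<ge> (\<alpha>-\<epsilon>)*(M*M) + (\<beta>-\<epsilon>)*(2*(M*M)) + (\<beta>-\<epsilon>)*(2*(M*M)) - ((-2*\<beta>+6*\<epsilon>)*(M*M))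
       + (\<beta>-\<epsilon>)*(M*M) + (\<beta>-\<epsilon>)*(M*M)"
    using s1 s3[OF d(2) e(2)] s3[OF d(3) e(3)] s4 s5[OF d(5) e(5)] s5[OF d(6) e(6)] by linarith
  finally show ?thesis by (simp add: algebra_simps)
qed

lemma cont_eps:
  fixes f :: "real \<Rightarrow> real"
  assumes "isCont f x" "e > 0"
  shows "\<exists>d>0. \<forall>y. \<bar>y - x\<bar> < d \<longrightarrow> \<bar>f y - f x\<bar> < e"
proof -
  from assms obtain s where s: "s > 0" "\<forall>y. y \<noteq> x \<and> norm (y - x) < s \<longrightarrow> norm (f y - f x) < e"
    unfolding isCont_def LIM_eq by blast
  have "\<bar>f y - f x\<bar> < e" if "\<bar>y - x\<bar> < s" for y
    using s assms(2) that by (cases "y = x") auto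
  then show ?thesis using s(1) by blast
qed

lemma conv_bound:
  fixes x y a d t :: real
  assumes "\<bar>x - a\<bar> < d" "\<bar>y - a\<bar> < d" "0 \<le> t" "t \<le> 1"
  shows "\<bar>y + t * (x - y) - a\<bar> < d"
proof -
  have "y + t * (x - y) - a = (1-t)*(y-a) + t*(x-a)" by (simp add: algebra_simps)
  then have "\<bar>y + t * (x - y) - a\<bar> \<le> (1-t)*\<bar>y-a\<bar> + t*\<bar>x-a\<bar>"
    using assms by (simp add: abs_mult abs_triangle_ineq[THEN order_trans])
  also have "\<dots> < (1-t)*d + t*d"
  proof (cases "t = 0")
    case True then show ?thesis using assms by simp
  next
    case False
    then have "t*\<bar>x-a\<bar> < t*d" using assms by auto
    moreover have "(1-t)*\<bar>y-a\<bar> \<le> (1-t)*d" using assms by (intro mult_left_mono) auto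
    ultimately show ?thesis by linarith
  qed
  finally show ?thesis by (simp add: algebra_simps)
qed

lemma der_helper:
  fixes eta eta1 :: "real \<Rightarrow> real" and y d :: "int \<Rightarrow> real" and i K :: int and t :: real
  assumes eta_d: "\<And>r. r > 0 \<Longrightarrow> (eta has_real_derivative eta1 r) (at r)"
  and z_def: "z = (\<lambda>t j. y j + t * d j)"
  and P_def: "P = (\<lambda>u. eta (u i) + eta (u i + u (i-1)) + eta (u i + u (i+1))
        + (2 * eta (2 * u K) - eta (u K + u (K-1)) - eta (u K + u (K+1))))"
  and H_def: "H = (\<lambda>t. eta1 (z t i) * d i + eta1 (z t i + z t (i-1)) * (d i + d (i-1))
         + eta1 (z t i + z t (i+1)) * (d i + d (i+1)) + 2 * (eta1 (2 * z t K) * (2 * d K))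
         - eta1 (z t K + z t (K-1)) * (d K + d (K-1)) - eta1 (z t K + z t (K+1)) * (d K + d (K+1)))"
  and pos: "z t i > 0" "z t (i-1) > 0" "z t (i+1) > 0" "z t K > 0" "z t (K-1) > 0" "z t (K+1) > 0"
  shows "((\<lambda>t. P (z t)) has_real_derivative H t) (at t)"
proof -
  have dcomp': "((\<lambda>t. eta (f t)) has_real_derivative g) (at t)"
    if "(f has_real_derivative f') (at t)" "f t > 0" "g = eta1 (f t) * f'" for f f' g
    using DERIV_chain2[OF eta_d[OF that(2)] that(1)] that(3) by simp
  have dz: "((\<lambda>t. z t j) has_real_derivative d j) (at t)" for j
    unfolding z_def by (auto intro!: derivative_eq_intros)
  show ?thesis
    unfolding P_def z_def
    apply (intro derivative_eq_intros dcomp')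
    using pos unfolding z_def
    apply (simp_all add: add_pos_pos)
    apply (simp add: algebra_simps)
    apply (simp add: H_def z_def algebra_simps)
    done
qed
theorem lemma4p1:
  fixes phi eta eta1 eta2 :: "real \<Rightarrow> real"
    and a0 r1 r2 a1 :: real
    and N K :: int
  assumes phi_d: "\<And>r. r > 0 \<Longrightarrow> (phi has_real_derivative eta r) (at r)"
    and eta_d: "\<And>r. r > 0 \<Longrightarrow> (eta has_real_derivative eta1 r) (at r)"
    and eta1_d: "\<And>r. r > 0 \<Longrightarrow> (eta1 has_real_derivative eta2 r) (at r)"
    and eta2_cont: "continuous_on {0<..} eta2"
    and cs: "0 < a0" "a0 < r1" "r1 < r2" "r2 < 2 * a0" "a1 > a0"
    and h1a: "\<And>r. 0 < r \<Longrightarrow> r < r1 \<Longrightarrow> eta1 r > 0"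
    and h1b: "\<And>r. r > r1 \<Longrightarrow> eta1 r < 0"
    and h2a: "\<And>r. 0 < r \<Longrightarrow> r < r2 \<Longrightarrow> eta2 r < 0"
    and h2b: "\<And>r. r > r2 \<Longrightarrow> eta2 r > 0"
    and h3a: "\<And>r. 0 < r \<Longrightarrow> r < a0 \<Longrightarrow> eta r + 2 * eta (2 * r) < 0"
    and h3b: "\<And>r. r > a0 \<Longrightarrow> eta r + 2 * eta (2 * r) > 0"
    and h4a: "\<And>r. 0 < r \<Longrightarrow> r < a1 \<Longrightarrow> eta1 r + 4 * eta1 (2 * r) > 0"
    and h4b: "\<And>r. r > a1 \<Longrightarrow> eta1 r + 4 * eta1 (2 * r) < 0"
    and NK: "0 < K" "K < N - 1"
    and stab: "eta1 a0 + 8 * eta1 (2 * a0) > 0"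
  shows "\<exists>U. (\<lambda>j. if j \<in> {-N..N} then a0 else 0) \<in> U
            \<and> U \<subseteq> pos_chain N
            \<and> openin (top_of_set (chain_space N)) U
            \<and> inj_on (PsiF eta N K) U
            \<and> openin (top_of_set (chain_space N)) (PsiF eta N K ` U)"
proof -
  define S where "S = {-N..N}"
  define \<alpha> where "\<alpha> = eta1 a0"
  define \<beta> where "\<beta> = eta1 (2*a0)"
  have al: "\<alpha> > 0" unfolding \<alpha>_def using h1a cs by auto
  have be: "\<beta> < 0" unfolding \<beta>_def using h1b cs by auto
  have ab: "\<alpha> + 8*\<beta> > 0" using stab unfolding \<alpha>_def \<beta>_def by simp
  define \<epsilon> where "\<epsilon> = min ((\<alpha>+8*\<beta>)/20) (-\<beta>/2)"
  have ep0: "\<epsilon> \<le> (\<alpha>+8*\<beta>)/20" "\<epsilon> \<le> -\<beta>/2" unfolding \<epsilon>_def by (rule min.cobounded1, rule min.cobounded2)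
  have ep: "\<epsilon> > 0" "\<beta> + \<epsilon> < 0" "\<alpha>+8*\<beta>-13*\<epsilon> > 0"
    using ep0 ab be by (auto simp: \<epsilon>_def)
  have ic1: "isCont eta1 a0" by (rule DERIV_isCont[OF eta1_d[OF cs(1)]])
  have ic2: "isCont eta1 (2*a0)" by (rule DERIV_isCont[OF eta1_d]) (use cs in simp)
  obtain \<delta>1 where d1: "\<delta>1 > 0" "\<And>s. \<bar>s - a0\<bar> < \<delta>1 \<Longrightarrow> \<bar>eta1 s - \<alpha>\<bar> < \<epsilon>"
    using cont_eps[OF ic1 ep(1)] unfolding \<alpha>_def by blast
  obtain \<delta>2 where d2: "\<delta>2 > 0" "\<And>s. \<bar>s - 2*a0\<bar> < \<delta>2 \<Longrightarrow> \<bar>eta1 s - \<beta>\<bar> < \<epsilon>"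
    using cont_eps[OF ic2 ep(1)] unfolding \<beta>_def by blast
  define \<delta> where "\<delta> = min (min (a0/2) (a1-a0)) (min \<delta>1 (\<delta>2/2))"
  have dl: "\<delta> > 0" "\<delta> \<le> a0/2" "\<delta> \<le> a1 - a0" "\<delta> \<le> \<delta>1" "2*\<delta> \<le> \<delta>2"
  proof -
    show "\<delta> > 0" unfolding \<delta>_def using d1 d2 cs by simp
    show "\<delta> \<le> a0/2" unfolding \<delta>_def by (rule order.trans[OF min.cobounded1 min.cobounded1])
    show "\<delta> \<le> a1 - a0" unfolding \<delta>_def by (rule order.trans[OF min.cobounded1 min.cobounded2])
    show "\<delta> \<le> \<delta>1" unfolding \<delta>_def by (rule order.trans[OF min.cobounded2 min.cobounded1])
    have "\<delta> \<le> \<delta>2/2" unfolding \<delta>_def by (rule order.trans[OF min.cobounded2 min.cobounded2])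
    then show "2*\<delta> \<le> \<delta>2" by simp
  qed
  define U where "U = {r \<in> chain_space N. \<forall>j\<in>S. \<bar>r j - a0\<bar> < \<delta>}"
  have Upos: "r j > 0" "r j < a1" if "r \<in> U" "j \<in> S" for r j
    using that dl unfolding U_def by (auto simp: abs_less_iff)
  have Usub: "U \<subseteq> pos_chain N"
    using Upos unfolding pos_chain_def U_def S_def by auto
  have Uch: "U \<subseteq> chain_space N" unfolding U_def by auto
  have a_in: "(\<lambda>j. if j \<in> {-N..N} then a0 else 0) \<in> U"
    unfolding U_def S_def chain_space_def using dl by auto
  have Uopen: "openin (top_of_set (chain_space N)) U"
  proof -
    have fin: "finite S" unfolding S_def by simp
    have "open (\<Inter>j\<in>S. (\<lambda>r::int\<Rightarrow>real. r j) -` ball a0 \<delta>)"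
      using fin by (intro open_INT ballI open_vimage) auto
    moreover have "U = chain_space N \<inter> (\<Inter>j\<in>S. (\<lambda>r::int\<Rightarrow>real. r j) -` ball a0 \<delta>)"
      unfolding U_def by (auto simp: dist_real_def abs_minus_commute)
    ultimately show ?thesis by auto
  qed
  have eta_cont: "continuous_on {0<..} eta"
    using eta_d by (intro continuous_at_imp_continuous_on ballI DERIV_isCont) auto
  have ce: "continuous_on U (\<lambda>r. eta (p r))" if "continuous_on U p" "\<forall>r\<in>U. p r > 0" for p
    by (rule continuous_on_compose2[OF eta_cont that(1)]) (use that in auto)
  have comp: "continuous_on U (\<lambda>r. PsiF eta N K r j)" for j
  proof -
    consider (c) "j \<in> {-N..-K} \<union> {K..N}" | (a) "j \<notin> {-N..-K} \<union> {K..N}" "j \<in> {-K+1..K-1}"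
      | (o) "j \<notin> {-N..-K} \<union> {K..N}" "j \<notin> {-K+1..K-1}" by blast
    then show ?thesis
    proof cases
      case c
      then have jS: "j \<in> S" unfolding S_def using NK by auto
      show ?thesis unfolding PsiF_def using c
        by (simp, intro continuous_intros ce coord_cont) (auto intro: Upos[OF _ jS])
    next
      case a
      then have S: "j \<in> S" "j-1 \<in> S" "j+1 \<in> S" "K \<in> S" "K-1 \<in> S" "K+1 \<in> S"
        unfolding S_def using NK by auto
      have pp: "\<forall>r\<in>U. 0 < r j" "\<forall>r\<in>U. 0 < r j + r (j-1)" "\<forall>r\<in>U. 0 < r j + r (j+1)"
        "\<forall>r\<in>U. 0 < 2 * r K" "\<forall>r\<in>U. 0 < r K + r (K-1)" "\<forall>r\<in>U. 0 < r K + r (K+1)"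
        using Upos(1)[OF _ S(1)] Upos(1)[OF _ S(2)] Upos(1)[OF _ S(3)] Upos(1)[OF _ S(4)]
          Upos(1)[OF _ S(5)] Upos(1)[OF _ S(6)] by (auto intro!: add_pos_pos)
      show ?thesis unfolding PsiF_def using a
        by (simp, intro continuous_intros ce coord_cont) (use pp in auto)
    next
      case o
      have eq0: "(\<lambda>r. PsiF eta N K r j) = (\<lambda>r. 0)"
        unfolding PsiF_def by (simp only: o if_False)
      show ?thesis unfolding eq0 by (rule continuous_on_const)
    qed
  qed
  have cont: "continuous_map (subtopology (top_of_set (chain_space N)) U) (top_of_set (chain_space N)) (PsiF eta N K)"
  proof -
    have e: "subtopology (top_of_set (chain_space N)) U = top_of_set U"
      using Uch by (simp add: subtopology_subtopology Int_absorb1)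
    have "continuous_map (top_of_set U) (product_topology (\<lambda>_. euclideanreal) UNIV) (PsiF eta N K)"
      unfolding continuous_map_componentwise_UNIV using comp by simp
    then have "continuous_map (top_of_set U) euclidean (PsiF eta N K)"
      by (simp only: euclidean_product_topology)
    moreover have "PsiF eta N K \<in> topspace (top_of_set U) \<rightarrow> chain_space N"
      unfolding PsiF_def chain_space_def using NK by auto
    ultimately show ?thesis unfolding e by (rule continuous_map_into_subtopology)
  qed
  have dcomp: "((\<lambda>t. eta (f t)) has_real_derivative eta1 (f t) * f') (at t)"
    if "(f has_real_derivative f') (at t)" "f t > 0" for f f' t
    using DERIV_chain2[OF eta_d[OF that(2)] that(1)] .
  have gmono: "eta p + 2*eta (2*p) < eta q + 2*eta (2*q)" if "0 < p" "p < q" "q < a1" for p q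
  proof (rule DERIV_pos_imp_increasing[OF that(2)])
    fix t assume t: "p \<le> t" "t \<le> q"
    have "((\<lambda>t. eta t + 2*eta (2*t)) has_real_derivative eta1 t + 2*(eta1 (2*t) * 2)) (at t)"
    proof -
      have tp: "t > 0" "2*t > 0" using t that by auto
      have "((\<lambda>t. 2*t) has_real_derivative 2) (at t)" by (auto intro!: derivative_eq_intros)
      from dcomp[OF this] tp have "((\<lambda>t. eta (2*t)) has_real_derivative eta1 (2*t) * 2) (at t)" by simp
      from DERIV_add[OF eta_d[OF tp(1)] DERIV_cmult[OF this, of 2]] show ?thesis by simp
    qed
    moreover have "eta1 t + 2*(eta1 (2*t) * 2) > 0" using h4a[of t] t that by auto
    ultimately show "\<exists>y. ((\<lambda>t. eta t + 2*eta (2*t)) has_real_derivative y) (at t) \<and> y > 0" by blast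
  qed
  have inj: "inj_on (PsiF eta N K) U"
  proof (rule inj_onI, rule ccontr)
    fix x y assume xU: "x \<in> U" and yU: "y \<in> U" and eq: "PsiF eta N K x = PsiF eta N K y" and ne: "x \<noteq> y"
    define d where "d j = x j - y j" for j
    have fin: "finite S" unfolding S_def by simp
    have Sne: "S \<noteq> {}" unfolding S_def using NK by auto
    define M where "M = Max ((\<lambda>j. \<bar>d j\<bar>) ` S)"
    have "M \<in> (\<lambda>j. \<bar>d j\<bar>) ` S" unfolding M_def using fin Sne by (intro Max_in) auto
    then obtain i where iS: "i \<in> S" and Mi: "\<bar>d i\<bar> = M" by (metis imageE)
    have dle: "\<bar>d j\<bar> \<le> M" if "j \<in> S" for j
      unfolding M_def using fin that by (intro Max_ge) auto
    obtain j0 where j0: "j0 \<in> S" "x j0 \<noteq> y j0"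
    proof -
      have "\<exists>j\<in>S. x j \<noteq> y j"
      proof (rule ccontr)
        assume "\<not> (\<exists>j\<in>S. x j \<noteq> y j)"
        then have "x j = y j" for j using xU yU unfolding U_def chain_space_def S_def by (cases "j \<in> {-N..N}") auto
        then show False using ne by auto
      qed
      then show ?thesis using that by blast
    qed
    have Mpos: "M > 0" using dle[OF j0(1)] j0(2) unfolding d_def by auto
    have eqi: "PsiF eta N K x i = PsiF eta N K y i" using eq by simp
    consider (c) "i \<in> {-N..-K} \<union> {K..N}" | (a) "i \<notin> {-N..-K} \<union> {K..N}" "i \<in> {-K+1..K-1}"
      using iS unfolding S_def by force
    then show False
    proof cases
      case c
      then have g: "eta (x i) + 2*eta (2*x i) = eta (y i) + 2*eta (2*y i)"
        using eqi unfolding PsiF_def by simp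
      have "x i \<noteq> y i" using Mi Mpos unfolding d_def by auto
      then show False
        using gmono[of "x i" "y i"] gmono[of "y i" "x i"] g Upos[OF xU iS] Upos[OF yU iS]
        by (cases "x i < y i") auto
    next
      case a
      then have Sm: "i-1 \<in> S" "i+1 \<in> S" "K \<in> S" "K-1 \<in> S" "K+1 \<in> S"
        unfolding S_def using NK by auto
      define P where "P u = eta (u i) + eta (u i + u (i-1)) + eta (u i + u (i+1))
        + (2 * eta (2 * u K) - eta (u K + u (K-1)) - eta (u K + u (K+1)))" for u :: "int \<Rightarrow> real"
      have PP: "PsiF eta N K v i = P v" for v unfolding PsiF_def P_def using a by simp
      define z where "z t j = y j + t * d j" for t j
      have zb: "\<bar>z t j - a0\<bar> < \<delta>" if "0 \<le> t" "t \<le> 1" "j \<in> S" for t j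
        unfolding z_def d_def using xU yU that by (intro conv_bound) (auto simp: U_def)
      have zp: "z t j > 0" if "0 \<le> t" "t \<le> 1" "j \<in> S" for t j
      proof -
        have "\<bar>z t j - a0\<bar> < \<delta>" by (rule zb[OF that])
        then show ?thesis using dl(2) cs(1) by (simp add: abs_less_iff)
      qed
      define H where "H t = eta1 (z t i) * d i + eta1 (z t i + z t (i-1)) * (d i + d (i-1))
         + eta1 (z t i + z t (i+1)) * (d i + d (i+1)) + 2 * (eta1 (2 * z t K) * (2 * d K))
         - eta1 (z t K + z t (K-1)) * (d K + d (K-1)) - eta1 (z t K + z t (K+1)) * (d K + d (K+1))" for t
      have der: "((\<lambda>t. P (z t)) has_real_derivative H t) (at t)" if "0 \<le> t" "t \<le> 1" for t
      proof -
        have pos: "z t i > 0" "z t (i-1) > 0" "z t (i+1) > 0" "z t K > 0" "z t (K-1) > 0" "z t (K+1) > 0"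
          by (rule zp[OF that iS], rule zp[OF that Sm(1)], rule zp[OF that Sm(2)], rule zp[OF that Sm(3)],
              rule zp[OF that Sm(4)], rule zp[OF that Sm(5)])
        have zz: "z = (\<lambda>t j. y j + t * d j)" by (simp add: fun_eq_iff z_def)
        have PPd: "P = (\<lambda>u. eta (u i) + eta (u i + u (i-1)) + eta (u i + u (i+1))
        + (2 * eta (2 * u K) - eta (u K + u (K-1)) - eta (u K + u (K+1))))" by (simp add: fun_eq_iff P_def)
        have HHd: "H = (\<lambda>t. eta1 (z t i) * d i + eta1 (z t i + z t (i-1)) * (d i + d (i-1))
         + eta1 (z t i + z t (i+1)) * (d i + d (i+1)) + 2 * (eta1 (2 * z t K) * (2 * d K))
         - eta1 (z t K + z t (K-1)) * (d K + d (K-1)) - eta1 (z t K + z t (K+1)) * (d K + d (K+1)))"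
          by (simp add: fun_eq_iff H_def)
        show ?thesis by (rule der_helper[OF eta_d zz PPd HHd pos])
      qed
      obtain \<xi> where xi: "0 < \<xi>" "\<xi> < 1" "P (z 1) - P (z 0) = (1 - 0) * H \<xi>"
      proof -
        have "\<And>t. 0 \<le> t \<Longrightarrow> t \<le> 1 \<Longrightarrow> ((\<lambda>t. P (z t)) has_real_derivative H t) (at t)"
          by (rule der)
        from MVT2[OF zero_less_one this] show ?thesis using that by blast
      qed
      have "z 1 = x" "z 0 = y" by (auto simp: z_def d_def fun_eq_iff)
      then have H0: "H \<xi> = 0" using xi eqi PP by simp
      have e_a: "\<bar>eta1 (z \<xi> j) - \<alpha>\<bar> < \<epsilon>" if "j \<in> S" for j
      proof -
        have "\<bar>z \<xi> j - a0\<bar> < \<delta>" by (rule zb[OF less_imp_le[OF xi(1)] less_imp_le[OF xi(2)] that])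
        then have "\<bar>z \<xi> j - a0\<bar> < \<delta>1" using dl(4) by linarith
        then show ?thesis by (rule d1(2))
      qed
      have e_b: "\<bar>eta1 (z \<xi> j + z \<xi> k) - \<beta>\<bar> < \<epsilon>" if "j \<in> S" "k \<in> S" for j k
      proof -
        have A: "\<bar>z \<xi> j - a0\<bar> < \<delta>" by (rule zb[OF less_imp_le[OF xi(1)] less_imp_le[OF xi(2)] that(1)])
        have B: "\<bar>z \<xi> k - a0\<bar> < \<delta>" by (rule zb[OF less_imp_le[OF xi(1)] less_imp_le[OF xi(2)] that(2)])
        have "\<bar>z \<xi> j + z \<xi> k - 2*a0\<bar> < \<delta>2"
          using A B dl(5) by (simp add: abs_less_iff)
        then show ?thesis using d2(2) by blast
      qed
      have e_b2: "\<bar>eta1 (2 * z \<xi> K) - \<beta>\<bar> < \<epsilon>"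
        using e_b[OF Sm(3) Sm(3)] by (simp only: mult_2)
      have "d i * H \<xi> \<ge> (\<alpha>+8*\<beta>-13*\<epsilon>)*(M*M)"
        unfolding H_def
        by (rule key_ineq[OF Mi dle[OF Sm(1)] dle[OF Sm(2)] dle[OF Sm(3)] dle[OF Sm(4)] dle[OF Sm(5)]
              e_a[OF iS] e_b[OF iS Sm(1)] e_b[OF iS Sm(2)] e_b2 e_b[OF Sm(3) Sm(4)] e_b[OF Sm(3) Sm(5)] ep(2)])
      moreover have "(\<alpha>+8*\<beta>-13*\<epsilon>)*(M*M) > 0" using ep(3) Mpos by (simp add: mult_pos_pos)
      ultimately show False using H0 by simp
    qed
  qed
  show ?thesis
    apply (rule exI[of _ U])
    using a_in Usub Uopen inj iod_chain[OF Uopen cont inj] by simp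
qed

end
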